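(* Let $\nu\in\mathbb{N}$, let $(X,d)$ be a complete $\nu$-generalized metric space, and let $T:X\to X$ be sequentially continuous and asymptotically regular. For $\gamma>0$ define $m:X\times X\to[0,\infty)$ by $m(x,y)=d(x,y)+\gamma\bigl(d(x,Tx)+d(y,Ty)\bigr)$. Suppose $d(Tx,Ty)<m(x,y)$ for all $x,y\in X$ with $x\ne y$, and that for every $\epsilon>0$ there exist $\delta>0$ and $N\in\mathbb{Z}^+$ such that for all $x,y\in X$, $m(T^Nx,T^Ny)<\delta+\epsilon$ implies $d(T^{N+1}x,T^{N+1}y)\le\epsilon$. Then $T$ has a unique fixed point $z$, and for every $x\in X$ the Picard iterates $T^nx$ $(n\in\mathbb{N})$ converge to $z$ in the strong sense.
   Context: Let $X$ be a nonempty set, $d:X\times X\to[0,\infty)$, and $\nu\in\mathbb{N}$. $(X,d)$ is a $\nu$-generalized metric space if: (1) $d(x,y)=0$ iff $x=y$; (2) $d(x,y)=d(y,x)$ for all $x,y$; (3) $d(x,y)\le d(x,u_1)+d(u_1,u_2)+\dots+d(u_\nu,y)$ for every set $\{x,u_1,\dots,u_\nu,y\}$ of $\nu+2$ pairwise distinct elements of $X$. A sequence $\{x_n\}$ in $X$ is Cauchy if $\lim_{n\to\infty}\sup\{d(x_n,x_{n+1+m}): m\in\mathbb{Z}^+\}=0$ ($\mathbb{Z}^+$ the nonnegative integers). $\{x_n\}$ converges to $x$ if $d(x,x_n)\to0$; it converges to $x$ in the strong sense if it is Cauchy and converges to $x$. $X$ is complete if every Cauchy sequence in $X$ converges. $T$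 is sequentially continuous if $\{Tx_n\}$ converges to $Tx$ whenever $\{x_n\}$ converges to $x$. $T$ is asymptotically regular if $d(T^nx,T^{n+1}x)+d(T^nx,T^{n+2}x)\to0$ for every $x\in X$. $T^0$ is the identity and $T^n$ the $n$-th iterate. *)

theory Defs
  imports "HOL-Analysis.Analysis"
begin

fun path_len :: "('a \<Rightarrow> 'a \<Rightarrow> real) \<Rightarrow> 'a list \<Rightarrow> real" where
  "path_len d (a # b # rest) = d a b + path_len d (b # rest)"
| "path_len d _ = 0"

definition gen_metric_space :: "nat \<Rightarrow> 'a set \<Rightarrow> ('a \<Rightarrow> 'a \<Rightarrow> real) \<Rightarrow> bool" where
  "gen_metric_space nu X d \<longleftrightarrow> X \<noteq> {} \<and>
     (\<forall>x\<in>X. \<forall>y\<in>X. d x y \<ge> 0) \<and>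
     (\<forall>x\<in>X. \<forall>y\<in>X. d x y = 0 \<longleftrightarrow> x = y) \<and>
     (\<forall>x\<in>X. \<forall>y\<in>X. d x y = d y x) \<and>
     (\<forall>x\<in>X. \<forall>y\<in>X. \<forall>us. length us = nu \<and> set us \<subseteq> X \<and> distinct (x # us @ [y])
        \<longrightarrow> d x y \<le> path_len d (x # us @ [y]))"

definition gm_Cauchy :: "('a \<Rightarrow> 'a \<Rightarrow> real) \<Rightarrow> (nat \<Rightarrow> 'a) \<Rightarrow> bool" where
  "gm_Cauchy d x \<longleftrightarrow> (\<forall>e>0. \<exists>N. \<forall>n\<ge>N. \<forall>m. d (x n) (x (n + 1 + m)) \<le> e)"

definition gm_converges :: "('a \<Rightarrow> 'a \<Rightarrow> real) \<Rightarrow> (nat \<Rightarrow> 'a) \<Rightarrow> 'a \<Rightarrow> bool" where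
  "gm_converges d x z \<longleftrightarrow> (\<lambda>n. d z (x n)) \<longlonglongrightarrow> 0"

definition gm_converges_strong :: "('a \<Rightarrow> 'a \<Rightarrow> real) \<Rightarrow> (nat \<Rightarrow> 'a) \<Rightarrow> 'a \<Rightarrow> bool" where
  "gm_converges_strong d x z \<longleftrightarrow> gm_Cauchy d x \<and> gm_converges d x z"

definition gm_complete :: "'a set \<Rightarrow> ('a \<Rightarrow> 'a \<Rightarrow> real) \<Rightarrow> bool" where
  "gm_complete X d \<longleftrightarrow> (\<forall>x. (\<forall>n. x n \<in> X) \<and> gm_Cauchy d x \<longrightarrow> (\<exists>z\<in>X. gm_converges d x z))"

definition gm_seq_continuous :: "'a set \<Rightarrow> ('a \<Rightarrow> 'a \<Rightarrow> real) \<Rightarrow> ('a \<Rightarrow> 'a) \<Rightarrow> bool" where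
  "gm_seq_continuous X d T \<longleftrightarrow> (\<forall>x z. (\<forall>n. x n \<in> X) \<and> z \<in> X \<and> gm_converges d x z
      \<longrightarrow> gm_converges d (\<lambda>n. T (x n)) (T z))"

definition gm_asymp_regular :: "'a set \<Rightarrow> ('a \<Rightarrow> 'a \<Rightarrow> real) \<Rightarrow> ('a \<Rightarrow> 'a) \<Rightarrow> bool" where
  "gm_asymp_regular X d T \<longleftrightarrow> (\<forall>x\<in>X.
      (\<lambda>n. d ((T ^^ n) x) ((T ^^ Suc n) x) + d ((T ^^ n) x) ((T ^^ Suc (Suc n)) x)) \<longlonglongrightarrow> 0)"

end

theory Submission
  imports Defs
begin


lemma path_len_map: "path_len d (map f [0..<Suc k]) = (\<Sum>i<k. d (f i) (f (Suc i)))"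
proof (induction k arbitrary: f)
  case 0 then show ?case by simp
next
  case (Suc k)
  have "map f [0..<Suc (Suc k)] = f 0 # f 1 # map (\<lambda>i. f (Suc (Suc i))) [0..<k]"
    by (simp add: map_upt_Suc del: upt_Suc)
  moreover have "map (f \<circ> Suc) [0..<Suc k] = f 1 # map (\<lambda>i. f (Suc (Suc i))) [0..<k]"
    by (simp add: map_upt_Suc del: upt_Suc)
  ultimately have "path_len d (map f [0..<Suc (Suc k)]) = d (f 0) (f 1) + path_len d (map (f \<circ> Suc) [0..<Suc k])"
    by simp
  also have "\<dots> = d (f 0) (f 1) + (\<Sum>i<k. d (f (Suc i)) (f (Suc (Suc i))))"
    using Suc[of "f \<circ> Suc"] by (simp add: comp_def)
  also have "\<dots> = (\<Sum>i<Suc k. d (f i) (f (Suc i)))"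
    unfolding sum.lessThan_Suc_shift by simp
  finally show ?case .
qed

lemma gm_path:
  assumes gms: "gen_metric_space nu X d"
    and fX: "\<And>i. i \<le> Suc nu \<Longrightarrow> f i \<in> X"
    and inj: "inj_on f {0..Suc nu}"
  shows "d (f 0) (f (Suc nu)) \<le> (\<Sum>i<Suc nu. d (f i) (f (Suc i)))"
proof -
  define us where "us = map f [1..<Suc nu]"
  have l1: "[0..<Suc (Suc nu)] = [0..<Suc nu] @ [Suc nu]" by simp
  have l2: "[0..<Suc nu] = 0 # [1..<Suc nu]" by (simp add: upt_conv_Cons del: upt_Suc)
  have eq: "f 0 # us @ [f (Suc nu)] = map f [0..<Suc (Suc nu)]"
    unfolding us_def l1 l2 by simp
  have len: "length us = nu" unfolding us_def by simp
  have sub: "set us \<subseteq> X" unfolding us_def using fX by auto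
  have dd: "distinct (map f [0..<Suc (Suc nu)])"
    using inj by (simp add: distinct_map atLeastLessThanSuc_atLeastAtMost del: upt_Suc)
  have dist: "distinct (f 0 # us @ [f (Suc nu)])" unfolding eq by (rule dd)
  have "d (f 0) (f (Suc nu)) \<le> path_len d (f 0 # us @ [f (Suc nu)])"
    using gms len sub dist fX[of 0] fX[of "Suc nu"] unfolding gen_metric_space_def by blast
  also have "\<dots> = (\<Sum>i<Suc nu. d (f i) (f (Suc i)))" using eq path_len_map by metis
  finally show ?thesis .
qed

lemma zigzag:
  fixes j K :: nat assumes j1: "1 \<le> j" and jK: "j \<le> K"
  shows "\<exists>g. g 0 = 0 \<and> g (Suc K) = j \<and> inj_on g {0..Suc K} \<and>
     (\<forall>i\<le>K. g (Suc i) = g i + 1 \<or> g (Suc i) = g i + 2 \<or> g i = g (Suc i) + 1 \<or> g i = g (Suc i) + 2)"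
proof -
  define M where "M = Suc K - j"
  define a where "a = (M + 1) div 2"
  have M1: "M \<ge> 1" using jK unfolding M_def by simp
  have a: "2 * a = M + 1 \<or> 2 * a = M" unfolding a_def by presburger
  have a1: "a \<ge> 1" "a \<le> M" using M1 a by auto
  define g where "g i = (if i < j then i else j + (if i - j < a then 2 * (i - j) + 1 else 2 * (M - (i - j))))" for i
  have G0: "g 0 = 0" using j1 unfolding g_def by simp
  have G1: "g (Suc K) = j" unfolding g_def M_def using jK a1 M_def by auto
  define h where "h q = (if q < a then 2 * q + 1 else 2 * (M - q))" for q
  have gh: "g i = (if i < j then i else j + h (i - j))" for i unfolding g_def h_def by simp
  have hinj: "q = r" if "q \<le> M" "r \<le> M" "h q = h r" for q r
  proof (cases "q < a")
    case True
    show ?thesis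
    proof (cases "r < a")
      case True with \<open>q < a\<close> that show ?thesis unfolding h_def by simp
    next
      case False with \<open>q < a\<close> that have "2 * q + 1 = 2 * (M - r)" unfolding h_def by simp
      then show ?thesis by presburger
    qed
  next
    case False
    show ?thesis
    proof (cases "r < a")
      case True with \<open>\<not> q < a\<close> that have "2 * r + 1 = 2 * (M - q)" unfolding h_def by simp
      then show ?thesis by presburger
    next
      case False with \<open>\<not> q < a\<close> that show ?thesis unfolding h_def by simp
    qed
  qed
  have hpos: "h q \<ge> 1" if "q < M" for q using that unfolding h_def by auto
  have G2: "inj_on g {0..Suc K}"
  proof (rule inj_onI)
    fix u v assume u: "u \<in> {0..Suc K}" and v: "v \<in> {0..Suc K}" and e: "g u = g v"
    have uM: "u - j \<le> M" and vM: "v - j \<le> M" using u v unfolding M_def by auto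
    show "u = v"
    proof (cases "u < j")
      case True
      show ?thesis
      proof (cases "v < j")
        case True with \<open>u < j\<close> e show ?thesis unfolding gh by simp
      next
        case False with \<open>u < j\<close> e show ?thesis unfolding gh by simp
      qed
    next
      case False
      show ?thesis
      proof (cases "v < j")
        case True with \<open>\<not> u < j\<close> e show ?thesis unfolding gh by simp
      next
        case False with \<open>\<not> u < j\<close> e have "h (u - j) = h (v - j)" unfolding gh by simp
        then have "u - j = v - j" using hinj uM vM by blast
        with False \<open>\<not> u < j\<close> show ?thesis by simp
      qed
    qed
  qed
  have G3: "\<forall>i\<le>K. g (Suc i) = g i + 1 \<or> g (Suc i) = g i + 2 \<or> g i = g (Suc i) + 1 \<or> g i = g (Suc i) + 2"
  proof (intro allI impI)
    fix i assume i: "i \<le> K"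
    have iM: "Suc i - j \<le> M" using i unfolding M_def by auto
    consider "Suc i < j" | "Suc i = j" | "Suc i > j" by linarith
    then show "g (Suc i) = g i + 1 \<or> g (Suc i) = g i + 2 \<or> g i = g (Suc i) + 1 \<or> g i = g (Suc i) + 2"
    proof cases
      case 1 then show ?thesis unfolding gh by simp
    next
      case 2 then have "g i = i" "g (Suc i) = j + h 0" unfolding gh by auto
      moreover have "h 0 = 1" using a1 unfolding h_def by simp
      ultimately show ?thesis using 2 by simp
    next
      case 3
      define q where "q = i - j"
      have q: "Suc i - j = Suc q" "\<not> i < j" using 3 unfolding q_def by auto
      have e1: "g i = j + h q" "g (Suc i) = j + h (Suc q)" using 3 q unfolding gh q_def by auto
      have sq: "Suc q \<le> M" using iM q by simp
      have "h (Suc q) = h q + 2 \<or> h q = h (Suc q) + 2 \<or> h q = h (Suc q) + 1 \<or> h (Suc q) = h q + 1"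
      proof (cases "Suc q < a")
        case True
        then have "h q = 2 * q + 1" "h (Suc q) = 2 * q + 3" unfolding h_def by auto
        then show ?thesis by simp
      next
        case F1: False
        show ?thesis
        proof (cases "q < a")
          case True
          then have qa: "Suc q = a" using F1 by simp
          have "h q = 2 * q + 1" "h (Suc q) = 2 * (M - Suc q)" unfolding h_def using True F1 by auto
          then show ?thesis using a qa by linarith
        next
          case False
          then have "h q = 2 * (M - q)" "h (Suc q) = 2 * (M - Suc q)" unfolding h_def using F1 by auto
          then show ?thesis using sq by linarith
        qed
      qed
      then show ?thesis using e1 by auto
    qed
  qed
  show ?thesis using G0 G1 G2 G3 by blast
qed


lemma gm_pos: "gen_metric_space nu X d \<Longrightarrow> x \<in> X \<Longrightarrow> y \<in> X \<Longrightarrow> d x y \<ge> 0"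
  unfolding gen_metric_space_def by auto
lemma gm_zero: "gen_metric_space nu X d \<Longrightarrow> x \<in> X \<Longrightarrow> y \<in> X \<Longrightarrow> d x y = 0 \<longleftrightarrow> x = y"
  unfolding gen_metric_space_def by blast
lemma gm_sym: "gen_metric_space nu X d \<Longrightarrow> x \<in> X \<Longrightarrow> y \<in> X \<Longrightarrow> d x y = d y x"
  unfolding gen_metric_space_def by blast

lemma cauchy_orbit:
  fixes x :: "nat \<Rightarrow> 'a"
  assumes gms: "gen_metric_space nu X d" and nu: "nu \<ge> 1"
    and xX: "\<And>n. x n \<in> X" and inj: "inj x"
    and s: "(\<lambda>n. d (x n) (x (Suc n))) \<longlonglongrightarrow> 0"
    and t: "(\<lambda>n. d (x n) (x (Suc (Suc n)))) \<longlonglongrightarrow> 0"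
    and gamma: "\<gamma> > 0"
    and step: "\<forall>\<epsilon>>0. \<exists>\<delta>>0. \<exists>N. \<forall>a b. a \<ge> N \<longrightarrow> b \<ge> N \<longrightarrow>
        d (x a) (x b) + \<gamma> * (d (x a) (x (Suc a)) + d (x b) (x (Suc b))) < \<delta> + \<epsilon> \<longrightarrow>
        d (x (Suc a)) (x (Suc b)) \<le> \<epsilon>"
  shows "gm_Cauchy d x"
  unfolding gm_Cauchy_def
proof (intro allI impI)
  fix e :: real assume e: "e > 0"
  note zero = gm_zero[OF gms xX xX] and sym = gm_sym[OF gms xX xX]
  obtain \<delta> N where dp: "\<delta> > 0" and st: "\<And>a b. a \<ge> N \<Longrightarrow> b \<ge> N \<Longrightarrow>
        d (x a) (x b) + \<gamma> * (d (x a) (x (Suc a)) + d (x b) (x (Suc b))) < \<delta> + e \<Longrightarrow>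
        d (x (Suc a)) (x (Suc b)) \<le> e"
    using step e by blast
  define \<eta> where "\<eta> = \<delta> / (4 * (real nu + 1) + 4 * \<gamma>)"
  have den: "4 * (real nu + 1) + 4 * \<gamma> > 0" using gamma by simp
  have etap: "\<eta> > 0" unfolding \<eta>_def using dp den by simp
  have eta_eq: "\<eta> * (4 * (real nu + 1) + 4 * \<gamma>) = \<delta>" unfolding \<eta>_def using den by simp
  obtain n1 where n1: "\<And>n. n \<ge> n1 \<Longrightarrow> d (x n) (x (Suc n)) < \<eta>"
    using order_tendstoD(2)[OF s etap] unfolding eventually_sequentially by blast
  obtain n2 where n2: "\<And>n. n \<ge> n2 \<Longrightarrow> d (x n) (x (Suc (Suc n))) < \<eta>"
    using order_tendstoD(2)[OF t etap] unfolding eventually_sequentially by blast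
  define n0 where "n0 = max N (max n1 n2)"
  have small: "d (x a) (x b) < \<eta>" if "a \<ge> n0" "b \<ge> n0"
      "b = a + 1 \<or> b = a + 2 \<or> a = b + 1 \<or> a = b + 2" for a b
    using that n1[of a] n2[of a] n1[of b] n2[of b] sym[of a b] unfolding n0_def by auto
  have S: "d (x (Suc a)) (x (Suc (a + j))) \<le> e" if "a \<ge> n0" "d (x a) (x (a + j)) < e + \<delta> / 2" for a j
  proof -
    have h1: "d (x a) (x (Suc a)) < \<eta>" "d (x (a+j)) (x (Suc (a+j))) < \<eta>"
      using n1[of a] n1[of "a+j"] that unfolding n0_def by auto
    have "\<gamma> * (d (x a) (x (Suc a)) + d (x (a+j)) (x (Suc (a+j)))) \<le> \<gamma> * (2 * \<eta>)"
      using h1 gamma by (intro mult_left_mono) auto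
    moreover have "\<gamma> * (2 * \<eta>) \<le> \<delta> / 2" using eta_eq etap gamma
      by (simp add: algebra_simps) (smt (verit) mult_nonneg_nonneg of_nat_0_le_iff)
    ultimately have "d (x a) (x (a + j)) + \<gamma> * (d (x a) (x (Suc a)) + d (x (a+j)) (x (Suc (a+j)))) < \<delta> + e"
      using that by linarith
    then show ?thesis using st[of a "a+j"] that unfolding n0_def by auto
  qed
  have nueta: "(real nu + 1) * \<eta> \<le> \<delta> / 4" using eta_eq etap gamma
    by (simp add: algebra_simps) (smt (verit) mult_pos_pos)
  have P: "\<forall>n\<ge>n0. d (x n) (x (n + j)) < e + \<delta> / 2" for j
  proof (induction j rule: less_induct)
    case (less j)
    show ?case
    proof (intro allI impI)
      fix n assume n: "n \<ge> n0"
      consider "j = 0" | "1 \<le> j \<and> j \<le> nu" | "j > nu" by linarith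
      then show "d (x n) (x (n + j)) < e + \<delta> / 2"
      proof cases
        case 1 then show ?thesis using zero[of n n] e dp by simp
      next
        case 2
        then obtain g where g0: "g 0 = 0" and g1: "g (Suc nu) = j" and ginj: "inj_on g {0..Suc nu}"
          and gs: "\<forall>i\<le>nu. g (Suc i) = g i + 1 \<or> g (Suc i) = g i + 2 \<or> g i = g (Suc i) + 1 \<or> g i = g (Suc i) + 2"
          using zigzag[of j nu] by blast
        define f where "f i = x (n + g i)" for i
        have finj: "inj_on f {0..Suc nu}"
        proof (rule inj_onI)
          fix u v assume uv: "u \<in> {0..Suc nu}" "v \<in> {0..Suc nu}" "f u = f v"
          then have "n + g u = n + g v" unfolding f_def using inj by (simp add: inj_eq)
          then show "u = v" using ginj uv by (simp add: inj_on_eq_iff)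
        qed
        have "d (f 0) (f (Suc nu)) \<le> (\<Sum>i<Suc nu. d (f i) (f (Suc i)))"
          by (rule gm_path[OF gms _ finj]) (simp add: f_def xX)
        also have "\<dots> \<le> (\<Sum>i<Suc nu. \<eta>)"
        proof (rule sum_mono)
          fix i assume "i \<in> {..<Suc nu}"
          then have "i \<le> nu" by simp
          then show "d (f i) (f (Suc i)) \<le> \<eta>" unfolding f_def
            using small[of "n + g i" "n + g (Suc i)"] gs n by fastforce
        qed
        also have "\<dots> = (real nu + 1) * \<eta>" by simp
        finally show ?thesis using g0 g1 nueta e dp unfolding f_def by simp
      next
        case 3
        define f where "f i = (if i \<le> nu then x (n + i) else x (n + j))" for i
        have finj: "inj_on f {0..Suc nu}"
          using 3 unfolding f_def inj_on_def by (auto simp: inj_eq[OF inj])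
        have "d (f 0) (f (Suc nu)) \<le> (\<Sum>i<Suc nu. d (f i) (f (Suc i)))"
          by (rule gm_path[OF gms _ finj]) (simp add: f_def xX)
        also have "\<dots> = (\<Sum>i<nu. d (f i) (f (Suc i))) + d (f nu) (f (Suc nu))" by simp
        also have "\<dots> \<le> (\<Sum>i<nu. \<eta>) + e"
        proof (rule add_mono)
          show "(\<Sum>i<nu. d (f i) (f (Suc i))) \<le> (\<Sum>i<nu. \<eta>)"
          proof (rule sum_mono)
            fix i assume "i \<in> {..<nu}"
            then show "d (f i) (f (Suc i)) \<le> \<eta>" unfolding f_def
              using small[of "n + i" "n + Suc i"] n by fastforce
          qed
          have lt: "j - nu < j" using 3 nu by simp
          have a0: "n + nu - 1 \<ge> n0" using n nu by simp
          have "d (x (n + nu - 1)) (x (n + nu - 1 + (j - nu))) < e + \<delta> / 2"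
            using less[OF lt] a0 by blast
          from S[OF a0 this] have H: "d (x (Suc (n + nu - 1))) (x (Suc (n + nu - 1 + (j - nu)))) \<le> e" .
          have e1: "Suc (n + nu - 1) = n + nu" and e2: "Suc (n + nu - 1 + (j - nu)) = n + j" using nu 3 by auto
          have "d (x (n + nu)) (x (n + j)) \<le> e" using H unfolding e1 e2 .
          then show "d (f nu) (f (Suc nu)) \<le> e" unfolding f_def by simp
        qed
        also have "\<dots> = real nu * \<eta> + e" by simp
        finally have "d (f 0) (f (Suc nu)) \<le> real nu * \<eta> + e" .
        moreover have "real nu * \<eta> < \<delta> / 2" using nueta etap dp by (simp add: algebra_simps)
        ultimately show ?thesis unfolding f_def using 3 by simp
      qed
    qed
  qed
  show "\<exists>N. \<forall>n\<ge>N. \<forall>m. d (x n) (x (n + 1 + m)) \<le> e"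
  proof (intro exI allI impI)
    fix n m assume n: "n \<ge> Suc n0"
    then obtain a where a: "n = Suc a" "a \<ge> n0" by (cases n) auto
    have "d (x a) (x (a + (1 + m))) < e + \<delta> / 2" using P a by blast
    from S[OF a(2) this] show "d (x n) (x (n + 1 + m)) \<le> e" using a by simp
  qed
qed


lemma limit_unique:
  fixes x :: "nat \<Rightarrow> 'a"
  assumes gms: "gen_metric_space nu X d" and nu: "nu \<ge> 1"
    and xX: "\<And>n. x n \<in> X" and inj: "inj x" and yX: "y \<in> X" and wX: "w \<in> X"
    and cy: "(\<lambda>n. d y (x n)) \<longlonglongrightarrow> 0" and cw: "(\<lambda>n. d w (x n)) \<longlonglongrightarrow> 0"
    and s: "(\<lambda>n. d (x n) (x (Suc n))) \<longlonglongrightarrow> 0"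
  shows "y = w"
proof (rule ccontr)
  assume ne: "y \<noteq> w"
  have "finite (x -` {y, w})" by (rule finite_vimageI) (simp_all add: inj)
  then obtain B where B: "\<forall>k\<in>x -` {y, w}. k < B" using finite_nat_set_iff_bounded by blast
  have xB: "x k \<noteq> y \<and> x k \<noteq> w" if "k \<ge> B" for k
  proof -
    have "k \<notin> x -` {y, w}" using B that by (meson not_less)
    then show ?thesis by simp
  qed
  define fs where "fs n i = (if i = 0 then y else if i \<le> nu then x (n + i - 1) else w)" for n i
  have bound: "d y w \<le> (\<Sum>i<Suc nu. d (fs n i) (fs n (Suc i)))" if n: "n \<ge> B" for n
  proof -
    have finj: "inj_on (fs n) {0..Suc nu}"
    proof (rule inj_onI)
      fix u v assume uv: "u \<in> {0..Suc nu}" "v \<in> {0..Suc nu}" "fs n u = fs n v"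
      have xn: "x (n + i - 1) \<noteq> y \<and> x (n + i - 1) \<noteq> w" if "i \<ge> 1" for i
        using xB[of "n + i - 1"] n that by simp
      show "u = v" using uv ne xn[of u] xn[of v] unfolding fs_def
        by (auto split: if_splits simp: inj_eq[OF inj])
    qed
    have "d (fs n 0) (fs n (Suc nu)) \<le> (\<Sum>i<Suc nu. d (fs n i) (fs n (Suc i)))"
      by (rule gm_path[OF gms _ finj]) (simp add: fs_def xX yX wX)
    then show ?thesis unfolding fs_def by simp
  qed
  have lim: "(\<lambda>n. \<Sum>i<Suc nu. d (fs n i) (fs n (Suc i))) \<longlonglongrightarrow> 0"
  proof (rule tendsto_null_sum)
    fix i assume i: "i \<in> {..<Suc nu}"
    consider "i = 0" | "0 < i \<and> i < nu" | "i = nu" using i by fastforce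
    then show "(\<lambda>n. d (fs n i) (fs n (Suc i))) \<longlonglongrightarrow> 0"
    proof cases
      case 1 then show ?thesis using cy nu unfolding fs_def by simp
    next
      case 2
      have "(\<lambda>n. d (x (n + (i - 1))) (x (Suc (n + (i - 1))))) \<longlonglongrightarrow> 0"
        using LIMSEQ_ignore_initial_segment[OF s, of "i - 1"] by simp
      moreover have "(\<lambda>n. d (fs n i) (fs n (Suc i))) = (\<lambda>n. d (x (n + (i - 1))) (x (Suc (n + (i - 1)))))"
        using 2 unfolding fs_def by (auto intro!: ext simp: Suc_diff_Suc)
      ultimately show ?thesis by simp
    next
      case 3
      have "(\<lambda>n. d w (x (n + (nu - 1)))) \<longlonglongrightarrow> 0"
        using LIMSEQ_ignore_initial_segment[OF cw, of "nu - 1"] by simp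
      moreover have "(\<lambda>n. d (fs n i) (fs n (Suc i))) = (\<lambda>n. d w (x (n + (nu - 1))))"
        using 3 nu gm_sym[OF gms _ wX] xX unfolding fs_def by (auto intro!: ext)
      ultimately show ?thesis by simp
    qed
  qed
  have "d y w \<le> 0" by (rule LIMSEQ_le_const[OF lim]) (use bound in blast)
  then have "d y w = 0" using gm_pos[OF gms yX wX] by simp
  then show False using ne gm_zero[OF gms yX wX] by simp
qed

lemma orbit_result:
  fixes nu :: nat and X :: "'a set" and d :: "'a \<Rightarrow> 'a \<Rightarrow> real"
    and T :: "'a \<Rightarrow> 'a" and \<gamma> :: real and m :: "'a \<Rightarrow> 'a \<Rightarrow> real"
  assumes nu_pos: "nu \<ge> 1"
    and gms: "gen_metric_space nu X d"
    and compl: "gm_complete X d"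
    and T_maps: "\<forall>x\<in>X. T x \<in> X"
    and cont: "gm_seq_continuous X d T"
    and ar: "gm_asymp_regular X d T"
    and gamma_pos: "\<gamma> > 0"
    and m_def: "\<forall>x y. m x y = d x y + \<gamma> * (d x (T x) + d y (T y))"
    and meir: "\<forall>\<epsilon>>0. \<exists>\<delta>>0. \<exists>N::nat. \<forall>x\<in>X. \<forall>y\<in>X.
        m ((T ^^ N) x) ((T ^^ N) y) < \<delta> + \<epsilon> \<longrightarrow> d ((T ^^ Suc N) x) ((T ^^ Suc N) y) \<le> \<epsilon>"
    and x0: "x0 \<in> X"
  shows "\<exists>z\<in>X. T z = z \<and> gm_converges_strong d (\<lambda>n. (T ^^ n) x0) z"
proof -
  define x where "x n = (T ^^ n) x0" for n
  have xeq: "(\<lambda>n. (T ^^ n) x0) = x" by (simp add: x_def fun_eq_iff)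
  have xX: "x n \<in> X" for n unfolding x_def by (induction n) (use x0 T_maps in auto)
  have xS: "x (Suc n) = T (x n)" for n unfolding x_def by simp
  have xadd: "x (a + r) = (T ^^ r) (x a)" for a r
  proof -
    have "x (a + r) = (T ^^ (r + a)) x0" unfolding x_def by (simp add: add.commute)
    also have "\<dots> = (T ^^ r) (x a)" unfolding x_def by (simp add: funpow_add)
    finally show ?thesis .
  qed
  note pos = gm_pos[OF gms xX xX]
  have arx: "(\<lambda>n. d (x n) (x (Suc n)) + d (x n) (x (Suc (Suc n)))) \<longlonglongrightarrow> 0"
    using ar x0 unfolding gm_asymp_regular_def x_def by blast
  have s: "(\<lambda>n. d (x n) (x (Suc n))) \<longlonglongrightarrow> 0"
    by (rule tendsto_sandwich[OF _ _ tendsto_const arx]) (auto simp: pos)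
  have t: "(\<lambda>n. d (x n) (x (Suc (Suc n)))) \<longlonglongrightarrow> 0"
    by (rule tendsto_sandwich[OF _ _ tendsto_const arx]) (auto simp: pos)
  show ?thesis
  proof (cases "inj x")
    case True
    have step: "\<forall>\<epsilon>>0. \<exists>\<delta>>0. \<exists>N. \<forall>a b. a \<ge> N \<longrightarrow> b \<ge> N \<longrightarrow>
        d (x a) (x b) + \<gamma> * (d (x a) (x (Suc a)) + d (x b) (x (Suc b))) < \<delta> + \<epsilon> \<longrightarrow>
        d (x (Suc a)) (x (Suc b)) \<le> \<epsilon>"
    proof (intro allI impI)
      fix \<epsilon> :: real assume "\<epsilon> > 0"
      then obtain \<delta> N where dp: "\<delta> > 0" and H: "\<forall>x\<in>X. \<forall>y\<in>X.
        m ((T ^^ N) x) ((T ^^ N) y) < \<delta> + \<epsilon> \<longrightarrow> d ((T ^^ Suc N) x) ((T ^^ Suc N) y) \<le> \<epsilon>"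
        using meir by blast
      have "\<forall>a b. a \<ge> N \<longrightarrow> b \<ge> N \<longrightarrow>
        d (x a) (x b) + \<gamma> * (d (x a) (x (Suc a)) + d (x b) (x (Suc b))) < \<delta> + \<epsilon> \<longrightarrow>
        d (x (Suc a)) (x (Suc b)) \<le> \<epsilon>"
      proof (intro allI impI)
        fix a b assume a: "a \<ge> N" and b: "b \<ge> N"
          and lt: "d (x a) (x b) + \<gamma> * (d (x a) (x (Suc a)) + d (x b) (x (Suc b))) < \<delta> + \<epsilon>"
        have ea: "x a = (T ^^ N) (x (a - N))" "x (Suc a) = (T ^^ Suc N) (x (a - N))"
          using xadd[of "a - N" N] xadd[of "a - N" "Suc N"] a by simp_all
        have eb: "x b = (T ^^ N) (x (b - N))" "x (Suc b) = (T ^^ Suc N) (x (b - N))"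
          using xadd[of "b - N" N] xadd[of "b - N" "Suc N"] b by simp_all
        have "m ((T ^^ N) (x (a - N))) ((T ^^ N) (x (b - N))) < \<delta> + \<epsilon>"
          using lt m_def unfolding ea(1)[symmetric] eb(1)[symmetric] by (simp add: xS)
        then show "d (x (Suc a)) (x (Suc b)) \<le> \<epsilon>" using H xX unfolding ea(2) eb(2) by blast
      qed
      then show "\<exists>\<delta>>0. \<exists>N. \<forall>a b. a \<ge> N \<longrightarrow> b \<ge> N \<longrightarrow>
        d (x a) (x b) + \<gamma> * (d (x a) (x (Suc a)) + d (x b) (x (Suc b))) < \<delta> + \<epsilon> \<longrightarrow>
        d (x (Suc a)) (x (Suc b)) \<le> \<epsilon>" using dp by blast
    qed
    have C: "gm_Cauchy d x"
      by (rule cauchy_orbit[OF gms nu_pos xX True s t gamma_pos step])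
    then obtain y where yX: "y \<in> X" and cy: "gm_converges d x y"
      using compl xX unfolding gm_complete_def by blast
    have cTy: "(\<lambda>n. d (T y) (x (Suc n))) \<longlonglongrightarrow> 0"
      using cont yX xX cy unfolding gm_seq_continuous_def gm_converges_def by (simp add: xS)
    have cy': "(\<lambda>n. d y (x (Suc n))) \<longlonglongrightarrow> 0"
      using cy unfolding gm_converges_def by (rule LIMSEQ_Suc)
    have "y = T y"
    proof (rule limit_unique[OF gms nu_pos _ _ yX _ cy' cTy])
      show "\<And>n. x (Suc n) \<in> X" by (rule xX)
      show "inj (\<lambda>n. x (Suc n))" by (intro inj_onI) (auto dest: injD[OF True])
      show "T y \<in> X" using T_maps yX by blast
      show "(\<lambda>n. d (x (Suc n)) (x (Suc (Suc n)))) \<longlonglongrightarrow> 0" using LIMSEQ_Suc[OF s] .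
    qed
    then have "T y = y" by (rule sym)
    moreover have "gm_converges_strong d x y" unfolding gm_converges_strong_def using C cy by (rule conjI)
    ultimately have "T y = y \<and> gm_converges_strong d x y" by (rule conjI)
    then show ?thesis unfolding xeq using yX by (rule bexI)
  next
    case False
    then obtain p q where pq: "p < q" "x p = x q"
      unfolding inj_def by (metis linorder_neqE_nat)
    define k where "k = q - p"
    have k: "k > 0" "q = p + k" using pq unfolding k_def by auto
    have per1: "x (p + k + r) = x (p + r)" for r
      using xadd[of "p + k" r] xadd[of p r] pq k by simp
    have per: "x (p + i * k + r) = x (p + r)" for i r
    proof (induction i arbitrary: r)
      case 0 then show ?case by simp
    next
      case (Suc i)
      have "x (p + Suc i * k + r) = x (p + k + (i * k + r))" by (simp add: algebra_simps)
      also have "\<dots> = x (p + (i * k + r))" by (rule per1)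
      also have "\<dots> = x (p + r)" using Suc.IH[of r] by (simp add: add.assoc)
      finally show ?case .
    qed
    have sm: "strict_mono (\<lambda>i. p + i * k)" using k by (auto simp: strict_mono_def)
    have "((\<lambda>n. d (x n) (x (Suc n))) \<circ> (\<lambda>i. p + i * k)) \<longlonglongrightarrow> 0"
      by (rule LIMSEQ_subseq_LIMSEQ[OF s sm])
    moreover have "((\<lambda>n. d (x n) (x (Suc n))) \<circ> (\<lambda>i. p + i * k)) = (\<lambda>i. d (x p) (x (Suc p)))"
    proof (rule ext)
      fix i
      have "x (p + i * k) = x p" using per[of i 0] by simp
      moreover have "x (Suc (p + i * k)) = x (Suc p)" using per[of i 1] by simp
      ultimately show "((\<lambda>n. d (x n) (x (Suc n))) \<circ> (\<lambda>i. p + i * k)) i = d (x p) (x (Suc p))" by simp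
    qed
    ultimately have "d (x p) (x (Suc p)) = 0" by (simp add: LIMSEQ_const_iff)
    then have "x p = x (Suc p)" using gm_zero[OF gms xX xX, of p "Suc p"] by simp
    then have fixp: "T (x p) = x p" using xS[of p] by simp
    have const: "x (p + r) = x p" for r
    proof (induction r)
      case (Suc r)
      have "x (p + Suc r) = T (x (p + r))" using xS[of "p + r"] by simp
      then show ?case using Suc fixp by simp
    qed simp
    have const2: "x n = x p" if "n \<ge> p" for n using const[of "n - p"] that by simp
    have C: "gm_Cauchy d x" unfolding gm_Cauchy_def
    proof (intro allI impI exI)
      fix e :: real and n m assume "e > 0" "p \<le> n"
      then show "d (x n) (x (n + 1 + m)) \<le> e"
        using const2[of n] const2[of "n + 1 + m"] gm_zero[OF gms xX xX, of p p] by simp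
    qed
    have cv: "gm_converges d x (x p)" unfolding gm_converges_def
    proof -
      have "\<forall>\<^sub>F n in sequentially. d (x p) (x n) = 0"
        unfolding eventually_sequentially
      proof (intro exI allI impI)
        fix n assume "p \<le> n"
        then show "d (x p) (x n) = 0" using const2[of n] gm_zero[OF gms xX xX, of p p] by simp
      qed
      then show "(\<lambda>n. d (x p) (x n)) \<longlonglongrightarrow> 0" by (simp add: tendsto_eventually)
    qed
    have "gm_converges_strong d x (x p)" unfolding gm_converges_strong_def using C cv by (rule conjI)
    with fixp have "T (x p) = x p \<and> gm_converges_strong d x (x p)" by (rule conjI)
    then show ?thesis unfolding xeq using xX[of p] by (rule bexI)
  qed
qed


theorem theorem3p7:
  fixes nu :: nat and X :: "'a set" and d :: "'a \<Rightarrow> 'a \<Rightarrow> real"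
    and T :: "'a \<Rightarrow> 'a" and \<gamma> :: real and m :: "'a \<Rightarrow> 'a \<Rightarrow> real"
  assumes nu_pos: "nu \<ge> 1"
    and gms: "gen_metric_space nu X d"
    and compl: "gm_complete X d"
    and T_maps: "\<forall>x\<in>X. T x \<in> X"
    and cont: "gm_seq_continuous X d T"
    and ar: "gm_asymp_regular X d T"
    and gamma_pos: "\<gamma> > 0"
    and m_def: "\<forall>x y. m x y = d x y + \<gamma> * (d x (T x) + d y (T y))"
    and contr: "\<forall>x\<in>X. \<forall>y\<in>X. x \<noteq> y \<longrightarrow> d (T x) (T y) < m x y"
    and meir: "\<forall>\<epsilon>>0. \<exists>\<delta>>0. \<exists>N::nat. \<forall>x\<in>X. \<forall>y\<in>X.
        m ((T ^^ N) x) ((T ^^ N) y) < \<delta> + \<epsilon> \<longrightarrow> d ((T ^^ Suc N) x) ((T ^^ Suc N) y) \<le> \<epsilon>"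
  shows "\<exists>z\<in>X. T z = z \<and> (\<forall>w\<in>X. T w = w \<longrightarrow> w = z)
           \<and> (\<forall>x\<in>X. gm_converges_strong d (\<lambda>n. (T ^^ n) x) z)"
proof -
  obtain x0 where x0: "x0 \<in> X" using gms unfolding gen_metric_space_def by auto
  note OR = orbit_result[OF nu_pos gms compl T_maps cont ar gamma_pos m_def meir]
  obtain z where zX: "z \<in> X" and Tz: "T z = z" using OR[OF x0] by blast
  have uniq: "w = z" if wX: "w \<in> X" and Tw: "T w = w" for w
  proof (rule ccontr)
    assume ne: "w \<noteq> z"
    have "d (T w) (T z) < m w z" using contr wX zX ne by blast
    also have "m w z = d w z" using m_def gm_zero[OF gms wX wX] gm_zero[OF gms zX zX] Tw Tz by simp
    finally show False using Tw Tz by simp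
  qed
  show ?thesis
  proof (intro bexI conjI ballI impI)
    show "z \<in> X" by (rule zX)
    show "T z = z" by (rule Tz)
    show "w = z" if "w \<in> X" "T w = w" for w using uniq that by blast
    fix x assume xX: "x \<in> X"
    then obtain z' where "z' \<in> X" "T z' = z'" "gm_converges_strong d (\<lambda>n. (T ^^ n) x) z'"
      using OR by blast
    moreover have "z' = z" using uniq calculation by blast
    ultimately show "gm_converges_strong d (\<lambda>n. (T ^^ n) x) z" by simp
  qed
qed

end
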